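(* If the Follow algorithm (described in the context) discovers an edge (observes a successful infection along it) belonging to some $\delta$-edge connected component of $\mathcal G$, then it discovers every edge of that $\delta$-edge connected component.
   Context: A temporal graph $\mathcal G=(V,E,\lambda)$ with lifetime $T_{\max}$ consists of a finite undirected static graph $(V,E)$ and a labeling $\lambda:E\to\{1,\dots,T_{\max}\}$; edge $e$ is present only at time $\lambda(e)$. Infection model with parameter $\delta\in\mathbb N^+$: a seed $(u,t)$ makes $u$ infected at time $t$; otherwise a susceptible node $u$ becomes infected at time $t$ iff some neighbour $v$ infectious at time $t$ has $\lambda(uv)=t$ (exactly one infector recorded if several exist). A node infected at time $t$ is infectious at times $t+1,\dots,t+\delta$ and resistant afterwards. Each round, the Discoverer submits seed infections and observes an infection log (triples $(u,v,t)$: $u$ infected $v$ at time $t$). $\delta$-edge connected components: relate two edges if they share an endpoint and their labels differ by at most $\delta$; the equivalence classes of the transitive closure are the $\delta$-edge connected components. Subroutine Explore$(u,t)$: for each $t'\in\{t-\delta-1,t-1,t\}$, if no round with seed $(u,t')$ was performed, perform a round with the single seed $(u,t')$ and record it; then for each newly observed successful infection along an edge $uv$ at time $t''$, call Explore$(v,t'')$. Algorithm Follow: pick any node $v_0$; for each $i\in[0,\lceil T_{\max}/\delta\rceil]$ perform a round with single seed $(v_0,i\delta)$; for each edge $e=v_0u$ along which an infection succeeds, call Explore$(u,\lambda(e))$. *)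

theory Defs
  imports Complex_Main
begin

text \<open>Times of seeds/infections are integers (Explore may seed at times t - delta - 1 \<le> 0).
The infectious period is d (= delta).\<close>

type_synonym 'v log = "('v \<times> 'v \<times> int) set"
type_synonym 'v memo = "('v \<times> int) \<Rightarrow> 'v log option"

definition temporal_graph :: "'v set \<Rightarrow> 'v set set \<Rightarrow> ('v set \<Rightarrow> nat) \<Rightarrow> nat \<Rightarrow> bool" where
  "temporal_graph V E lab Tmax \<longleftrightarrow>
     finite V \<and> E \<subseteq> {{a, b} | a b. a \<in> V \<and> b \<in> V \<and> a \<noteq> b} \<and>
     (\<forall>e\<in>E. 1 \<le> lab e \<and> lab e \<le> Tmax)"

definition can_infect ::
  "'v set set \<Rightarrow> ('v set \<Rightarrow> nat) \<Rightarrow> nat \<Rightarrow> ('v \<Rightarrow> int option) \<Rightarrow> 'v \<Rightarrow> 'v \<Rightarrow> int \<Rightarrow> bool" where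
  "can_infect E lab d I v u t \<longleftrightarrow>
     (\<exists>tv. I v = Some tv \<and> tv < t \<and> t \<le> tv + int d) \<and> {u, v} \<in> E \<and> int (lab {u, v}) = t"

definition infection_times ::
  "'v set set \<Rightarrow> ('v set \<Rightarrow> nat) \<Rightarrow> nat \<Rightarrow> 'v \<Rightarrow> int \<Rightarrow> ('v \<Rightarrow> int option) \<Rightarrow> bool" where
  "infection_times E lab d s t0 I \<longleftrightarrow>
     I s = Some t0 \<and>
     (\<forall>u t. u \<noteq> s \<longrightarrow>
        (I u = Some t \<longleftrightarrow>
           (\<exists>v. can_infect E lab d I v u t) \<and> (\<forall>t'<t. \<not> (\<exists>v. can_infect E lab d I v u t'))))"

text \<open>L is a possible infection log of the round with single seed (s, t0): for each
infected non-seed node exactly one (arbitrary) valid infector is recorded.\<close>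
definition round_log ::
  "'v set set \<Rightarrow> ('v set \<Rightarrow> nat) \<Rightarrow> nat \<Rightarrow> 'v \<Rightarrow> int \<Rightarrow> 'v log \<Rightarrow> bool" where
  "round_log E lab d s t0 L \<longleftrightarrow>
     (\<exists>I par. infection_times E lab d s t0 I \<and>
        (\<forall>u t. u \<noteq> s \<longrightarrow> I u = Some t \<longrightarrow> can_infect E lab d I (par u) u t) \<and>
        L = {(par u, u, t) | u t. u \<noteq> s \<and> I u = Some t})"

text \<open>A memo M records, for each seed (u,t) of a performed round, the observed log.
rounds_rel: for each t' in the list (in order), perform the round with seed (u,t')
unless one was already performed.\<close>
inductive rounds_rel ::
  "'v set set \<Rightarrow> ('v set \<Rightarrow> nat) \<Rightarrow> nat \<Rightarrow> 'v memo \<Rightarrow> 'v \<Rightarrow> int list \<Rightarrow> 'v memo \<Rightarrow> bool"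
  for E lab d where
  rounds_nil: "rounds_rel E lab d M u [] M"
| rounds_done: "(u, t') \<in> dom M \<Longrightarrow> rounds_rel E lab d M u ts M'
     \<Longrightarrow> rounds_rel E lab d M u (t' # ts) M'"
| rounds_new: "(u, t') \<notin> dom M \<Longrightarrow> round_log E lab d u t' L
     \<Longrightarrow> rounds_rel E lab d (M((u, t') \<mapsto> L)) u ts M'
     \<Longrightarrow> rounds_rel E lab d M u (t' # ts) M'"

text \<open>The newly observed infections along edges uv are those (u,v,t'') in the logs of
the rounds performed during this call; they are processed in an arbitrary order.\<close>
inductive explore_rel and explore_all_rel where
  explore: "rounds_rel E lab d M u [t - int d - 1, t - 1, t] M'
     \<Longrightarrow> distinct xs
     \<Longrightarrow> set xs = {(v, t''). \<exists>t'\<in>{t - int d - 1, t - 1, t}. M (u, t') = None \<and>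
                      (\<exists>L. M' (u, t') = Some L \<and> (u, v, t'') \<in> L)}
     \<Longrightarrow> explore_all_rel E lab d M' xs M''
     \<Longrightarrow> explore_rel E lab d M u t M''"
| explore_all_nil: "explore_all_rel E lab d M [] M"
| explore_all_cons: "explore_rel E lab d M v t M'
     \<Longrightarrow> explore_all_rel E lab d M' xs M''
     \<Longrightarrow> explore_all_rel E lab d M ((v, t) # xs) M''"

definition follow_seed_times :: "nat \<Rightarrow> nat \<Rightarrow> int set" where
  "follow_seed_times Tmax d = {i * int d | i. 0 \<le> i \<and> i \<le> \<lceil>real Tmax / real d\<rceil>}"

definition follow_run ::
  "'v set set \<Rightarrow> ('v set \<Rightarrow> nat) \<Rightarrow> nat \<Rightarrow> nat \<Rightarrow> 'v \<Rightarrow> 'v memo \<Rightarrow> bool" where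
  "follow_run E lab d Tmax v0 M \<longleftrightarrow>
     (\<exists>Ls M1 xs.
        (\<forall>t\<in>follow_seed_times Tmax d. round_log E lab d v0 t (Ls t)) \<and>
        M1 = (\<lambda>(w, t). if w = v0 \<and> t \<in> follow_seed_times Tmax d then Some (Ls t) else None) \<and>
        distinct xs \<and>
        set xs = {(u, t''). \<exists>t\<in>follow_seed_times Tmax d. (v0, u, t'') \<in> Ls t} \<and>
        explore_all_rel E lab d M1 xs M)"

definition discovered :: "'v memo \<Rightarrow> 'v set set" where
  "discovered M = {{v, u} | v u t. \<exists>s L. M s = Some L \<and> (v, u, t) \<in> L}"

definition delta_adj :: "'v set set \<Rightarrow> ('v set \<Rightarrow> nat) \<Rightarrow> nat \<Rightarrow> 'v set rel" where
  "delta_adj E lab d = {(e, f). e \<in> E \<and> f \<in> E \<and> e \<inter> f \<noteq> {} \<and>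
                               \<bar>int (lab e) - int (lab f)\<bar> \<le> int d}"

definition delta_equiv :: "'v set set \<Rightarrow> ('v set \<Rightarrow> nat) \<Rightarrow> nat \<Rightarrow> 'v set rel" where
  "delta_equiv E lab d = Id_on E \<union> (delta_adj E lab d)\<^sup>+"

definition delta_components :: "'v set set \<Rightarrow> ('v set \<Rightarrow> nat) \<Rightarrow> nat \<Rightarrow> 'v set set set" where
  "delta_components E lab d = E // delta_equiv E lab d"

end

theory Submission
  imports Defs
begin

definition expl :: "'v memo \<Rightarrow> nat \<Rightarrow> 'v \<Rightarrow> int \<Rightarrow> bool" where
  "expl M d u t \<longleftrightarrow> (u, t - int d - 1) \<in> dom M \<and> (u, t - 1) \<in> dom M \<and> (u, t) \<in> dom M"

lemma expl_mono: "M \<subseteq>\<^sub>m M' \<Longrightarrow> expl M d u t \<Longrightarrow> expl M' d u t"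
proof -
  assume a: "M \<subseteq>\<^sub>m M'" "expl M d u t"
  have "dom M \<subseteq> dom M'" using a(1) by (rule map_le_implies_dom_le)
  then show ?thesis using a(2) unfolding expl_def by blast
qed

lemma rounds_props:
  "rounds_rel E lab d M u ts M' \<Longrightarrow> M \<subseteq>\<^sub>m M' \<and> (\<forall>t\<in>set ts. (u,t) \<in> dom M') \<and>
     (\<forall>w s L. M (w,s) = None \<longrightarrow> M' (w,s) = Some L \<longrightarrow> w = u \<and> s \<in> set ts \<and> round_log E lab d u s L)"
proof (induction rule: rounds_rel.induct)
  case (rounds_nil M u)
  then show ?case by (simp add: map_le_refl)
next
  case (rounds_done u t' M ts M')
  have "dom M \<subseteq> dom M'" using conjunct1[OF rounds_done.IH] by (rule map_le_implies_dom_le)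
  then have "(u,t') \<in> dom M'" using rounds_done.hyps(1) by blast
  show ?case
  proof (intro conjI)
    show "M \<subseteq>\<^sub>m M'" using rounds_done.IH by blast
    show "\<forall>t\<in>set (t' # ts). (u, t) \<in> dom M'" using rounds_done.IH \<open>(u,t') \<in> dom M'\<close> by simp
    show "\<forall>w s L. M (w, s) = None \<longrightarrow> M' (w, s) = Some L \<longrightarrow> w = u \<and> s \<in> set (t' # ts) \<and> round_log E lab d u s L"
      using rounds_done.IH by (meson list.set_intros(2))
  qed
next
  case (rounds_new u t' M L ts M')
  have le1: "M \<subseteq>\<^sub>m M((u, t') \<mapsto> L)"
    unfolding map_le_def
  proof
    fix a assume "a \<in> dom M"
    then have "a \<noteq> (u,t')" using rounds_new.hyps(1) by blast
    then show "M a = (M((u, t') \<mapsto> L)) a" by simp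
  qed
  have L': "M' (u,t') = Some L" using rounds_new.IH unfolding map_le_def by (metis domI fun_upd_same)
  show ?case
  proof (intro conjI)
    show "M \<subseteq>\<^sub>m M'" using le1 conjunct1[OF rounds_new.IH] by (rule map_le_trans)
    have I2: "\<forall>t\<in>set ts. (u, t) \<in> dom M'" using conjunct1[OF conjunct2[OF rounds_new.IH]] .
    show "\<forall>t\<in>set (t' # ts). (u, t) \<in> dom M'" using I2 L' by auto
    show "\<forall>w s La. M (w, s) = None \<longrightarrow> M' (w, s) = Some La \<longrightarrow> w = u \<and> s \<in> set (t' # ts) \<and> round_log E lab d u s La"
    proof (intro allI impI)
      fix w s La assume a: "M (w, s) = None" "M' (w, s) = Some La"
      show "w = u \<and> s \<in> set (t' # ts) \<and> round_log E lab d u s La"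
      proof (cases "(w,s) = (u,t')")
        case True
        then show ?thesis using a L' rounds_new.hyps(2) by auto
      next
        case False
        then have "(M((u, t') \<mapsto> L)) (w,s) = None" using a by auto
        then have "w = u \<and> s \<in> set ts \<and> round_log E lab d u s La"
          using conjunct2[OF conjunct2[OF rounds_new.IH]] a(2) by blast
        then show ?thesis by simp
      qed
    qed
  qed
qed

definition newok :: "'v set set \<Rightarrow> ('v set \<Rightarrow> nat) \<Rightarrow> nat \<Rightarrow> 'v memo \<Rightarrow> 'v memo \<Rightarrow> bool" where
  "newok E lab d M M'' \<longleftrightarrow> (\<forall>w s L. M (w,s) = None \<longrightarrow> M'' (w,s) = Some L \<longrightarrow>
      round_log E lab d w s L \<and> (\<forall>b tt. (w,b,tt) \<in> L \<longrightarrow> expl M'' d b tt))"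

lemma explore_props:
  "explore_rel E lab d M u t M'' \<Longrightarrow> M \<subseteq>\<^sub>m M'' \<and> expl M'' d u t \<and> newok E lab d M M''"
  "explore_all_rel E lab d M xs M'' \<Longrightarrow> M \<subseteq>\<^sub>m M'' \<and> (\<forall>(v,t)\<in>set xs. expl M'' d v t) \<and> newok E lab d M M''"
proof (induction rule: explore_rel_explore_all_rel.inducts)
  case (explore E lab d M u t M' xs M'')
  note R = rounds_props[OF explore.hyps(1)]
  have le: "M \<subseteq>\<^sub>m M''" using conjunct1[OF R] conjunct1[OF explore.IH] by (rule map_le_trans)
  have dd: "dom M' \<subseteq> dom M''" using conjunct1[OF explore.IH] by (rule map_le_implies_dom_le)
  have ex: "expl M'' d u t" using conjunct1[OF conjunct2[OF R]] dd unfolding expl_def by auto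
  have "newok E lab d M M''"
    unfolding newok_def
  proof (intro allI impI)
    fix w s L assume a: "M (w, s) = None" "M'' (w, s) = Some L"
    show "round_log E lab d w s L \<and> (\<forall>b tt. (w, b, tt) \<in> L \<longrightarrow> expl M'' d b tt)"
    proof (cases "M' (w,s)")
      case None
      then show ?thesis using explore.IH a unfolding newok_def by blast
    next
      case (Some L')
      have "M'' (w,s) = Some L'" using explore.IH Some unfolding map_le_def by (metis domI)
      then have "L' = L" using a by simp
      then have w: "w = u" "s \<in> {t - int d - 1, t - 1, t}" "round_log E lab d u s L"
        using R a Some by auto
      have "expl M'' d b tt" if "(w,b,tt) \<in> L" for b tt
      proof -
        have "(b,tt) \<in> set xs" using explore.hyps(3) w that a Some \<open>L' = L\<close> by auto
        then show ?thesis using explore.IH by auto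
      qed
      then show ?thesis using w by auto
    qed
  qed
  then show ?case using le ex by blast
next
  case (explore_all_nil E lab d M)
  then show ?case by (simp add: map_le_refl newok_def)
next
  case (explore_all_cons E lab d M v t M' xs M'')
  have le: "M \<subseteq>\<^sub>m M''" using conjunct1[OF explore_all_cons.IH(1)] conjunct1[OF explore_all_cons.IH(2)] by (rule map_le_trans)
  note I1 = explore_all_cons.IH(1) and I2 = explore_all_cons.IH(2)
  have le2: "M' \<subseteq>\<^sub>m M''" using I2 by (rule conjunct1)
  have ex: "expl M'' d v t" using le2 conjunct1[OF conjunct2[OF I1]] by (rule expl_mono)
  have "newok E lab d M M''"
    unfolding newok_def
  proof (intro allI impI)
    fix w s L assume a: "M (w, s) = None" "M'' (w, s) = Some L"
    show "round_log E lab d w s L \<and> (\<forall>b tt. (w, b, tt) \<in> L \<longrightarrow> expl M'' d b tt)"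
    proof (cases "M' (w,s)")
      case None
      then show ?thesis using explore_all_cons.IH a unfolding newok_def by blast
    next
      case (Some L')
      have "M'' (w,s) = Some L'" using explore_all_cons.IH Some unfolding map_le_def by (metis domI)
      then have "L' = L" using a by simp
      have n1: "newok E lab d M M'" using I1 by blast
      have "round_log E lab d w s L' \<and> (\<forall>b tt. (w, b, tt) \<in> L' \<longrightarrow> expl M' d b tt)"
        using n1 a(1) Some unfolding newok_def by blast
      then show ?thesis using \<open>L' = L\<close> expl_mono[OF le2] by blast
    qed
  qed
  moreover have "\<forall>(v,t)\<in>set xs. expl M'' d v t" using I2 by blast
  ultimately show ?case using le ex by simp
qed

lemma follow_good:
  assumes "follow_run E lab d Tmax v0 M"
  shows "(\<forall>w s L. M (w,s) = Some L \<longrightarrow> round_log E lab d w s L) \<and>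
         (\<forall>w s L b t. M (w,s) = Some L \<longrightarrow> (w,b,t) \<in> L \<longrightarrow> expl M d b t)"
proof -
  obtain Ls M1 xs where A: "\<forall>t\<in>follow_seed_times Tmax d. round_log E lab d v0 t (Ls t)"
    "M1 = (\<lambda>(w, t). if w = v0 \<and> t \<in> follow_seed_times Tmax d then Some (Ls t) else None)"
    "set xs = {(u, t''). \<exists>t\<in>follow_seed_times Tmax d. (v0, u, t'') \<in> Ls t}"
    "explore_all_rel E lab d M1 xs M"
    using assms unfolding follow_run_def by blast
  note P = explore_props(2)[OF A(4)]
  have "round_log E lab d w s L \<and> (\<forall>b t. (w,b,t) \<in> L \<longrightarrow> expl M d b t)" if m: "M (w,s) = Some L" for w s L
  proof (cases "M1 (w,s)")
    case None
    then show ?thesis using P m unfolding newok_def by blast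
  next
    case (Some L')
    have "M (w,s) = Some L'" using P Some unfolding map_le_def by (metis domI)
    then have "L' = L" using m by simp
    then have w: "w = v0" "s \<in> follow_seed_times Tmax d" "L = Ls s" using Some A(2)
      by (auto split: if_splits)
    have "expl M d b t" if "(w,b,t) \<in> L" for b t
    proof -
      have "(b,t) \<in> set xs" using A(3) w that by auto
      then show ?thesis using P by auto
    qed
    then show ?thesis using w A(1) by auto
  qed
  then show ?thesis by blast
qed


lemma can_infect_nonneg: "can_infect E lab d I v u t \<Longrightarrow> 0 \<le> t"
  unfolding can_infect_def by auto

lemma infected_nonneg:
  assumes "infection_times E lab d s t0 I" "x \<noteq> s" "I x = Some tx"
  shows "0 \<le> tx"
proof -
  have "\<exists>v. can_infect E lab d I v x tx" using assms unfolding infection_times_def by blast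
  then obtain v where "can_infect E lab d I v x tx" by blast
  then show ?thesis by (rule can_infect_nonneg)
qed

lemma round_first:
  assumes rl: "round_log E lab d u s L" and ce: "{u,c} \<in> E" and uc: "u \<noteq> c"
    and lo: "s < int (lab {u,c})" and hi: "int (lab {u,c}) \<le> s + int d"
    and none: "\<forall>x. {u,x} \<in> E \<longrightarrow> \<not> (s < int (lab {u,x}) \<and> int (lab {u,x}) < int (lab {u,c}))"
  shows "(u, c, int (lab {u,c})) \<in> L"
proof -
  obtain I par where it: "infection_times E lab d u s I"
    and pr: "\<forall>x t. x \<noteq> u \<longrightarrow> I x = Some t \<longrightarrow> can_infect E lab d I (par x) x t"
    and L: "L = {(par x, x, t) | x t. x \<noteq> u \<and> I x = Some t}"
    using rl unfolding round_log_def by blast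
  define T where "T = int (lab {u,c})"
  have Iu: "I u = Some s" using it unfolding infection_times_def by blast
  have itx: "\<And>x t. x \<noteq> u \<Longrightarrow> I x = Some t \<longleftrightarrow>
           (\<exists>v. can_infect E lab d I v x t) \<and> (\<forall>t'<t. \<not> (\<exists>v. can_infect E lab d I v x t'))"
    using it unfolding infection_times_def by blast
  have late_n: "\<forall>x tx. x \<noteq> u \<longrightarrow> I x = Some tx \<longrightarrow> nat tx < n \<longrightarrow> T \<le> tx" for n
  proof (induction n)
    case 0
    then show ?case by simp
  next
    case (Suc n)
    show ?case
    proof (intro allI impI)
      fix x tx assume a: "x \<noteq> u" "I x = Some tx" "nat tx < Suc n"
      obtain v where "can_infect E lab d I v x tx" using itx[OF a(1)] a(2) by blast
      then obtain tv where v: "I v = Some tv" "tv < tx" "tx \<le> tv + int d" "{x,v} \<in> E"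
          "int (lab {x,v}) = tx"
        unfolding can_infect_def by blast
      show "T \<le> tx"
      proof (cases "v = u")
        case True
        then have "tv = s" using v Iu by simp
        moreover have "{u,x} \<in> E" "lab {u,x} = lab {x,v}" using v True by (auto simp: insert_commute)
        ultimately show ?thesis using none v unfolding T_def by force
      next
        case False
        have "0 \<le> tv" using infected_nonneg[OF it False v(1)] .
        then have "nat tv < n" using v a by linarith
        then have "T \<le> tv" using Suc.IH False v by blast
        then show ?thesis using v by linarith
      qed
    qed
  qed
  have late: "x \<noteq> u \<Longrightarrow> I x = Some tx \<Longrightarrow> T \<le> tx" for x tx
    using late_n[of "Suc (nat tx)"] by auto
  have ci: "can_infect E lab d I u c T"
    unfolding can_infect_def T_def using Iu lo hi ce by (auto simp: insert_commute)
  have no_earlier: "\<not> (\<exists>v. can_infect E lab d I v c t')" if "t' < T" for t'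
  proof
    assume "\<exists>v. can_infect E lab d I v c t'"
    then obtain v tv where v: "I v = Some tv" "tv < t'" "int (lab {c,v}) = t'"
      unfolding can_infect_def by blast
    show False
    proof (cases "v = u")
      case True
      then show ?thesis using v that unfolding T_def by (simp add: insert_commute)
    next
      case False
      then show ?thesis using late[OF False v(1)] v that by linarith
    qed
  qed
  have Ic: "I c = Some T" using itx[of c T] uc ci no_earlier by auto
  have "can_infect E lab d I (par c) c T" using pr Ic uc by auto
  then obtain tp where "I (par c) = Some tp" "tp < T" unfolding can_infect_def by blast
  then have "par c = u" using late by force
  then show ?thesis using L Ic uc unfolding T_def by force
qed


locale fr =
  fixes E :: "'v set set" and lab :: "'v set \<Rightarrow> nat" and d :: nat and M :: "'v memo"
  assumes W: "\<And>e. e \<in> E \<Longrightarrow> \<exists>a b. a \<noteq> b \<and> e = {a,b}"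
    and dpos: "d > 0"
    and valid: "\<And>w s L. M (w,s) = Some L \<Longrightarrow> round_log E lab d w s L"
    and closed: "\<And>w s L b t. M (w,s) = Some L \<Longrightarrow> (w,b,t) \<in> L \<Longrightarrow> expl M d b t"
begin

lemma edge_ne: assumes "{u,c} \<in> E" shows "u \<noteq> c"
proof
  assume "u = c"
  then obtain a b where "a \<noteq> b" "{u} = {a,b}" using W[OF assms] by auto
  then show False by blast
qed

lemma edge1:
  assumes m: "M (u,s) = Some L" and ce: "{u,c} \<in> E"
    and lo: "s < int (lab {u,c})" and hi: "int (lab {u,c}) \<le> s + int d"
    and none: "\<forall>x. {u,x} \<in> E \<longrightarrow> \<not> (s < int (lab {u,x}) \<and> int (lab {u,x}) < int (lab {u,c}))"
  shows "expl M d c (int (lab {u,c})) \<and> expl M d u (int (lab {u,c}))"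
proof -
  have uc: "u \<noteq> c" using edge_ne[OF ce] .
  have "(u, c, int (lab {u,c})) \<in> L"
    using round_first[OF valid[OF m] ce uc lo hi none] .
  then have ec: "expl M d c (int (lab {u,c}))" using closed m by blast
  then obtain L2 where L2: "M (c, int (lab {u,c}) - 1) = Some L2" unfolding expl_def by auto
  have e2: "{c,u} \<in> E" using ce by (simp add: insert_commute)
  have lc: "lab {c,u} = lab {u,c}" by (simp add: insert_commute)
  have "(c, u, int (lab {c,u})) \<in> L2"
    by (rule round_first[OF valid[OF L2] e2 uc[symmetric]]) (use dpos lc in auto)
  then have "expl M d u (int (lab {c,u}))" using closed L2 by blast
  then show ?thesis using ec lc by simp
qed

lemma fwd:
  assumes "expl M d u t" "{u,c} \<in> E" "t \<le> int (lab {u,c})" "int (lab {u,c}) \<le> t + int d"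
    "nat (int (lab {u,c}) - t) \<le> n"
  shows "expl M d c (int (lab {u,c})) \<and> expl M d u (int (lab {u,c}))"
  using assms
proof (induction n arbitrary: u c t rule: less_induct)
  case (less n)
  have IHs: "\<And>m u c t. m < n \<Longrightarrow> expl M d u t \<Longrightarrow> {u,c} \<in> E \<Longrightarrow> t \<le> int (lab {u,c})
     \<Longrightarrow> int (lab {u,c}) \<le> t + int d \<Longrightarrow> nat (int (lab {u,c}) - t) \<le> m
     \<Longrightarrow> expl M d c (int (lab {u,c})) \<and> expl M d u (int (lab {u,c}))"
    using less.IH by blast
  define T where "T = int (lab {u,c})"
  show ?case
  proof (cases "T = t")
    case True
    obtain L where L: "M (u, t - 1) = Some L" using less.prems(1) unfolding expl_def by auto
    show ?thesis
      by (rule edge1[OF L less.prems(2)]) (use True dpos in \<open>auto simp: T_def\<close>)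
  next
    case False
    then have tT: "t < T" using less.prems unfolding T_def by linarith
    show ?thesis
    proof (cases "\<exists>x. {u,x} \<in> E \<and> t < int (lab {u,x}) \<and> int (lab {u,x}) < T")
      case True
      then obtain x where x: "{u,x} \<in> E" "t < int (lab {u,x})" "int (lab {u,x}) < T" by blast
      have "expl M d x (int (lab {u,x})) \<and> expl M d u (int (lab {u,x}))"
        by (rule IHs[of "nat (int (lab {u,x}) - t)" u t x])
           (use x less.prems in \<open>auto simp: T_def\<close>)
      then have ex: "expl M d u (int (lab {u,x}))" by blast
      show ?thesis
        by (rule IHs[of "nat (T - int (lab {u,x}))" u "int (lab {u,x})" c])
           (use x less.prems ex in \<open>auto simp: T_def\<close>)
    next
      case False
      obtain L where L: "M (u, t) = Some L" using less.prems(1) unfolding expl_def by auto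
      show ?thesis
        by (rule edge1[OF L less.prems(2)]) (use False tT less.prems in \<open>auto simp: T_def\<close>)
    qed
  qed
qed

lemma bwd:
  assumes "expl M d u t" "{u,c} \<in> E" "t - int d \<le> int (lab {u,c})" "int (lab {u,c}) < t"
    "nat (int (lab {u,c}) - (t - int d)) \<le> n"
  shows "expl M d c (int (lab {u,c})) \<and> expl M d u (int (lab {u,c}))"
  using assms
proof (induction n arbitrary: c rule: less_induct)
  case (less n)
  have IHs: "\<And>m c. m < n \<Longrightarrow> expl M d u t \<Longrightarrow> {u,c} \<in> E \<Longrightarrow> t - int d \<le> int (lab {u,c})
     \<Longrightarrow> int (lab {u,c}) < t \<Longrightarrow> nat (int (lab {u,c}) - (t - int d)) \<le> m
     \<Longrightarrow> expl M d c (int (lab {u,c})) \<and> expl M d u (int (lab {u,c}))"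
    using less.IH by blast
  define T where "T = int (lab {u,c})"
  show ?case
  proof (cases "\<exists>x. {u,x} \<in> E \<and> t - int d \<le> int (lab {u,x}) \<and> int (lab {u,x}) < T")
    case True
    then obtain x where x: "{u,x} \<in> E" "t - int d \<le> int (lab {u,x})" "int (lab {u,x}) < T" by blast
    have "expl M d x (int (lab {u,x})) \<and> expl M d u (int (lab {u,x}))"
      by (rule IHs[of "nat (int (lab {u,x}) - (t - int d))" x])
         (use x less.prems in \<open>auto simp: T_def\<close>)
    then have "expl M d u (int (lab {u,x}))" by blast
    then show ?thesis
      by (rule fwd[of u "int (lab {u,x})" c "nat (T - int (lab {u,x}))"])
         (use x less.prems in \<open>auto simp: T_def\<close>)
  next
    case False
    obtain L where L: "M (u, t - int d - 1) = Some L" using less.prems(1) unfolding expl_def by auto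
    show ?thesis
      by (rule edge1[OF L less.prems(2)]) (use False less.prems in \<open>auto simp: T_def\<close>)
  qed
qed

lemma h2:
  assumes "expl M d u t" "{u,c} \<in> E" "\<bar>int (lab {u,c}) - t\<bar> \<le> int d"
  shows "expl M d c (int (lab {u,c})) \<and> expl M d u (int (lab {u,c}))"
proof (cases "t \<le> int (lab {u,c})")
  case True
  then show ?thesis using fwd[OF assms(1,2) True _ order_refl] assms(3) by auto
next
  case False
  then show ?thesis using bwd[OF assms(1,2) _ _ order_refl] assms(3) by auto
qed

lemma h1:
  assumes m: "M (w,s) = Some L"
  shows "(a,b,t) \<in> L \<Longrightarrow> expl M d b t"
proof -
  obtain I par where it: "infection_times E lab d w s I"
    and pr: "\<forall>x t. x \<noteq> w \<longrightarrow> I x = Some t \<longrightarrow> can_infect E lab d I (par x) x t"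
    and L: "L = {(par x, x, t) | x t. x \<noteq> w \<and> I x = Some t}"
    using valid[OF m] unfolding round_log_def by blast
  have "\<forall>a b t. (a,b,t) \<in> L \<longrightarrow> nat t < n \<longrightarrow> expl M d b t" for n
  proof (induction n)
    case 0
    then show ?case by simp
  next
    case (Suc n)
    show ?case
    proof (intro allI impI)
      fix a b t assume a: "(a,b,t) \<in> L" "nat t < Suc n"
      then have ab: "a = par b" "b \<noteq> w" "I b = Some t" using L by auto
      show "expl M d b t"
      proof (cases "a = w")
        case True
        then show ?thesis using closed[OF m] a by blast
      next
        case False
        have "can_infect E lab d I a b t" using pr ab by auto
        then obtain ta where ta: "I a = Some ta" "ta < t" "t \<le> ta + int d" "{b,a} \<in> E"
            "int (lab {b,a}) = t"
          unfolding can_infect_def by blast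
        have "(par a, a, ta) \<in> L" using L False ta by auto
        moreover have "0 \<le> ta" using infected_nonneg[OF it False ta(1)] .
        ultimately have "expl M d a ta" using Suc.IH ta a by auto
        moreover have "{a,b} \<in> E" "int (lab {a,b}) = t" using ta by (auto simp: insert_commute)
        ultimately show ?thesis using h2[of a ta b] ta by auto
      qed
    qed
  qed
  then show "(a,b,t) \<in> L \<Longrightarrow> expl M d b t" by (metis lessI)
qed

lemma entry_edge:
  assumes m: "M (w,s) = Some L" and e: "(a,b,t) \<in> L"
  shows "{a,b} \<in> E \<and> int (lab {a,b}) = t"
proof -
  obtain I par where pr: "\<forall>x t. x \<noteq> w \<longrightarrow> I x = Some t \<longrightarrow> can_infect E lab d I (par x) x t"
    and L: "L = {(par x, x, t) | x t. x \<noteq> w \<and> I x = Some t}"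
    using valid[OF m] unfolding round_log_def by blast
  have "can_infect E lab d I a b t" using pr L e by auto
  then show ?thesis unfolding can_infect_def by (auto simp: insert_commute)
qed

definition PP :: "'v set \<Rightarrow> bool" where
  "PP f \<longleftrightarrow> f \<in> E \<and> (\<forall>x\<in>f. expl M d x (int (lab f)))"

lemma adj_sym: "(g,h) \<in> delta_adj E lab d \<Longrightarrow> (h,g) \<in> delta_adj E lab d"
  unfolding delta_adj_def by (auto simp: abs_minus_commute)

lemma step: assumes "PP g" "(g,h) \<in> delta_adj E lab d" shows "PP h"
proof -
  have h: "h \<in> E" "g \<inter> h \<noteq> {}" "\<bar>int (lab g) - int (lab h)\<bar> \<le> int d"
    using assms(2) unfolding delta_adj_def by auto
  then obtain u where u: "u \<in> g" "u \<in> h" by blast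
  obtain a b where ab: "h = {a,b}" using W[OF h(1)] by blast
  obtain c where c: "h = {u,c}" using ab u by auto
  have "expl M d u (int (lab g))" using assms(1) u unfolding PP_def by blast
  then have "expl M d c (int (lab {u,c})) \<and> expl M d u (int (lab {u,c}))"
    using h2[of u "int (lab g)" c] h c by (auto simp: abs_minus_commute)
  then show ?thesis using h c unfolding PP_def by auto
qed

lemma tr_fwd: "(g,h) \<in> (delta_adj E lab d)\<^sup>+ \<Longrightarrow> PP g \<Longrightarrow> PP h"
  by (induction rule: trancl_induct) (auto intro: step)

lemma tr_bwd: "(g,h) \<in> (delta_adj E lab d)\<^sup>+ \<Longrightarrow> PP h \<Longrightarrow> PP g"
  by (induction rule: converse_trancl_induct) (auto intro: step adj_sym)

lemma PP_disc: assumes "PP f" shows "f \<in> discovered M"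
proof -
  obtain a b where ab: "a \<noteq> b" "f = {a,b}" using W assms unfolding PP_def by blast
  have fe: "{a,b} \<in> E" using assms ab unfolding PP_def by auto
  have "expl M d a (int (lab f))" using assms ab unfolding PP_def by auto
  then obtain L where L: "M (a, int (lab {a,b}) - 1) = Some L" using ab unfolding expl_def by auto
  have "(a, b, int (lab {a,b})) \<in> L"
    by (rule round_first[OF valid[OF L] fe ab(1)]) (use dpos in auto)
  then show ?thesis using L ab unfolding discovered_def by blast
qed

lemma comp_thm:
  assumes "C \<in> delta_components E lab d" "e \<in> C" "e \<in> discovered M"
  shows "C \<subseteq> discovered M"
proof -
  obtain v u t s L where vu: "e = {v,u}" "M s = Some L" "(v,u,t) \<in> L"
    using assms(3) unfolding discovered_def by blast
  obtain w s' where s: "s = (w,s')" by fastforce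
  have ee: "{v,u} \<in> E" "int (lab {v,u}) = t" using entry_edge[of w s' L v u t] vu s by auto
  have "expl M d u t" using h1[of w s' L v u t] vu s by auto
  then have "expl M d v t \<and> expl M d u t"
    using h2[of u t v] ee by (auto simp: insert_commute)
  then have Pe: "PP e" using ee vu unfolding PP_def by auto
  obtain x where x: "x \<in> E" "C = delta_equiv E lab d `` {x}"
    using assms(1) unfolding delta_components_def by (auto elim: quotientE)
  have "(x,e) \<in> delta_equiv E lab d" using x assms(2) by auto
  then have Px: "PP x" using Pe tr_bwd unfolding delta_equiv_def by (auto simp: Id_on_def)
  show ?thesis
  proof
    fix f assume "f \<in> C"
    then have "(x,f) \<in> delta_equiv E lab d" using x by auto
    then have "PP f" using Px tr_fwd unfolding delta_equiv_def by (auto simp: Id_on_def)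
    then show "f \<in> discovered M" by (rule PP_disc)
  qed
qed

end

theorem mainTheorem9:
  fixes V :: "'v set" and E :: "'v set set" and lab :: "'v set \<Rightarrow> nat"
    and Tmax d :: nat and v0 :: 'v and M :: "'v memo" and C :: "'v set set" and e :: "'v set"
  assumes "temporal_graph V E lab Tmax"
    and "d > 0"
    and "v0 \<in> V"
    and "follow_run E lab d Tmax v0 M"
    and "C \<in> delta_components E lab d"
    and "e \<in> C"
    and "e \<in> discovered M"
  shows "C \<subseteq> discovered M"
proof -
  note G = follow_good[OF assms(4)]
  interpret fr E lab d M
  proof
    show "\<exists>a b. a \<noteq> b \<and> e = {a,b}" if "e \<in> E" for e
      using assms(1) that unfolding temporal_graph_def by blast
    show "d > 0" by (rule assms(2))
    show "round_log E lab d w s L" if "M (w,s) = Some L" for w s L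
      using G that by blast
    show "expl M d b t" if "M (w,s) = Some L" "(w,b,t) \<in> L" for w s L b t
      using G that by blast
  qed
  show ?thesis using comp_thm assms(5-7) .
qed

end
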